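(* Let $s\in(\tfrac12,1)$, $\alpha\in(0,1)$, $c>0$, let $e\in C^{\alpha}(\mathbb{R})$ be $2\pi$-periodic with $\bar e=\frac1{2\pi}\int_0^{2\pi}e>0$, and let $g\in C^{\alpha}((0,+\infty))$ satisfy (G1) $\limsup_{t\to+\infty}[g(t)+\bar e]<0$. Then there exist constants $R>0$ and $C>0$ such that for every $\lambda\in(0,1)$ and every positive $2\pi$-periodic classical solution $u$ of $$(\Delta)^s u(t)+c\,u'(t)-\lambda g(u(t))=\lambda e(t),\qquad t\in\mathbb{R},$$ one has $0<u(t)<R$ for all $t$, and $$\|u'\|_{L^2(0,2\pi)}\le C\,\|e\|_{L^2(0,2\pi)}.$$
   Context: $(-\Delta)^s u(x)=C_{1,s}\,\mathrm{P.V.}\int_{\mathbb{R}}\frac{u(x)-u(z)}{|x-z|^{1+2s}}\,dz$ with $C_{1,s}=\left(\int_{\mathbb{R}}\frac{1-\cos\xi}{|\xi|^{1+2s}}d\xi\right)^{-1}$, and $(\Delta)^s u:=-(-\Delta)^s u$. A classical solution is a $C^{2s+\alpha}$ function satisfying the equation pointwise. *)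

theory Defs
  imports "HOL-Analysis.Analysis"
begin

definition holder_on :: "real \<Rightarrow> real set \<Rightarrow> (real \<Rightarrow> real) \<Rightarrow> bool" where
  "holder_on a S f \<longleftrightarrow> (\<exists>M. \<forall>x\<in>S. \<forall>y\<in>S. \<bar>f x - f y\<bar> \<le> M * \<bar>x - y\<bar> powr a)"

text \<open>Local Hoelder condition: Hoelder on every compact subset of S (used for C^a of an open set).\<close>
definition loc_holder_on :: "real \<Rightarrow> real set \<Rightarrow> (real \<Rightarrow> real) \<Rightarrow> bool" where
  "loc_holder_on a S f \<longleftrightarrow> (\<forall>K. compact K \<and> K \<subseteq> S \<longrightarrow> holder_on a K f)"

definition holder_space :: "real \<Rightarrow> (real \<Rightarrow> real) \<Rightarrow> bool" where
  "holder_space r f \<longleftrightarrow>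
     (let k = nat \<lceil>r\<rceil> - 1; b = r - real k in
       (\<forall>j<k. \<forall>x. (deriv ^^ j) f differentiable (at x)) \<and> holder_on b UNIV ((deriv ^^ k) f))"

definition C1 :: "real \<Rightarrow> real" where
  "C1 s = 1 / (LINT \<xi>|lborel. (1 - cos \<xi>) / \<bar>\<xi>\<bar> powr (1 + 2 * s))"

definition pv_frac :: "real \<Rightarrow> (real \<Rightarrow> real) \<Rightarrow> real \<Rightarrow> real \<Rightarrow> bool" where
  "pv_frac s u x L \<longleftrightarrow>
     (\<forall>\<epsilon>>0. set_integrable lborel {z. \<epsilon> < \<bar>x - z\<bar>} (\<lambda>z. (u x - u z) / \<bar>x - z\<bar> powr (1 + 2 * s))) \<and>
     ((\<lambda>\<epsilon>. LINT z:{z. \<epsilon> < \<bar>x - z\<bar>}|lborel. (u x - u z) / \<bar>x - z\<bar> powr (1 + 2 * s))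
        \<longlongrightarrow> L) (at_right 0)"

text \<open>(Delta)^s u (x) = - (-Delta)^s u (x) = - C_{1,s} * P.V. integral, where it exists.\<close>
definition has_pos_frac_lap :: "real \<Rightarrow> (real \<Rightarrow> real) \<Rightarrow> real \<Rightarrow> real \<Rightarrow> bool" where
  "has_pos_frac_lap s u x v \<longleftrightarrow> (\<exists>L. pv_frac s u x L \<and> v = - (C1 s * L))"

definition classical_solution ::
  "real \<Rightarrow> real \<Rightarrow> real \<Rightarrow> real \<Rightarrow> (real \<Rightarrow> real) \<Rightarrow> (real \<Rightarrow> real) \<Rightarrow> (real \<Rightarrow> real) \<Rightarrow> bool" where
  "classical_solution s a c lam g e u \<longleftrightarrow>
     holder_space (2 * s + a) u \<and>
     (\<forall>t. \<exists>v. has_pos_frac_lap s u t v \<and> v + c * deriv u t - lam * g (u t) = lam * e t)"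

end

theory Submission
  imports Defs
begin
lemma integrable_lborel_of_HK_nonneg:
  fixes f :: "real \<Rightarrow> real"
  assumes "f integrable_on A" "\<And>x. x \<in> A \<Longrightarrow> 0 \<le> f x"
    and "(\<lambda>x. indicator A x * f x) \<in> borel_measurable borel"
  shows "integrable lborel (\<lambda>x. indicator A x * f x)"
proof -
  have "f absolutely_integrable_on A" by (rule nonnegative_absolutely_integrable_1[OF assms(1,2)])
  then have "integrable lebesgue (\<lambda>x. indicator A x * f x)"
    unfolding set_integrable_def by simp
  then show ?thesis
    using integrable_completion[of "\<lambda>x. indicator A x * f x" lborel] assms(3) by simp
qed

lemma powr_integrable0:
  fixes g :: real assumes g: "g > -1"
  shows "integrable lborel (\<lambda>x. indicator {-1..1} x * \<bar>x\<bar> powr g)"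
proof -
  have "((\<lambda>x. x powr g) has_integral (1 powr (g+1) / (g+1))) {0..1}"
    by (rule has_integral_powr_from_0[OF g]) simp
  then have "(\<lambda>x. x powr g) integrable_on {0..1}" by blast
  then have i1: "integrable lborel (\<lambda>x. indicator {0..1} x * x powr g)"
    by (intro integrable_lborel_of_HK_nonneg) auto
  have i2: "integrable lborel (\<lambda>x. indicator {0..1} (0 + (-1) * x) * (0 + (-1) * x) powr g)"
    using lborel_integrable_real_affine[OF i1, of "-1" 0] by simp
  have "integrable lborel (\<lambda>x. indicator {0..1} x * x powr g + indicator {0..1} (0 + (-1) * x) * (0 + (-1) * x) powr g)"
    using i1 i2 by (rule Bochner_Integration.integrable_add)
  also have "(\<lambda>x. indicator {0..1} x * x powr g + indicator {0..1} (0 + (-1) * x) * (0 + (-1) * x) powr g)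
     = (\<lambda>x. indicator {-1..1} x * \<bar>x\<bar> powr g)"
    by (rule ext) (auto simp: indicator_def)
  finally show ?thesis .
qed

lemma powr_integrable_inf:
  fixes g :: real assumes g: "g < -1"
  shows "integrable lborel (\<lambda>x. indicator {x. 1 < \<bar>x\<bar>} x * \<bar>x\<bar> powr g)"
proof -
  have "((\<lambda>x. x powr g) has_integral -(1 powr (g+1)) / (g+1)) {1..}"
    by (rule has_integral_powr_to_inf[OF g]) simp
  then have "(\<lambda>x. x powr g) integrable_on {1..}" by blast
  then have i0: "integrable lborel (\<lambda>x. indicator {1..} x * x powr g)"
    by (intro integrable_lborel_of_HK_nonneg) auto
  have "set_integrable lborel {1<..} (\<lambda>x. x powr g)"
    by (rule set_integrable_subset[of _ "{1..}"]) (use i0 in \<open>auto simp: set_integrable_def\<close>)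
  then have i1: "integrable lborel (\<lambda>x. indicator {1<..} x * x powr g)"
    by (simp add: set_integrable_def)
  have i2: "integrable lborel (\<lambda>x. indicator {1<..} (0 + (-1) * x) * (0 + (-1) * x) powr g)"
    using lborel_integrable_real_affine[OF i1, of "-1" 0] by simp
  have "integrable lborel (\<lambda>x. indicator {1<..} x * x powr g + indicator {1<..} (0 + (-1) * x) * (0 + (-1) * x) powr g)"
    using i1 i2 by (rule Bochner_Integration.integrable_add)
  also have "(\<lambda>x. indicator {1<..} x * x powr g + indicator {1<..} (0 + (-1) * x) * (0 + (-1) * x) powr g)
     = (\<lambda>x. indicator {x. 1 < \<bar>x\<bar>} x * \<bar>x\<bar> powr g)"
    by (rule ext) (auto simp: indicator_def)
  finally show ?thesis .
qed

lemma periodic_window: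
  fixes f :: "real \<Rightarrow> real"
  assumes cf: "continuous_on UNIV f" and per: "\<And>x. f (x + p) = f x" and p: "p \<ge> 0"
  shows "integral {a..a+p} f = integral {0..p} f"
proof -
  have int: "f integrable_on {x..y}" for x y
    by (rule integrable_continuous_interval) (use cf continuous_on_subset in blast)
  have fp: "f \<circ> (\<lambda>x. x + p) = f" using per by (auto simp: o_def)
  have sh: "integral {x..y} f = integral {x+p..y+p} f" for x y
    using integral_shift[of x p y f] cf fp by (auto intro: continuous_on_subset)
  show ?thesis
  proof (cases "a \<ge> 0")
    case True
    have "integral {0..a} f + integral {a..a+p} f = integral {0..a+p} f"
      by (rule Henstock_Kurzweil_Integration.integral_combine) (use True p int in auto)
    moreover have "integral {0..p} f + integral {p..a+p} f = integral {0..a+p} f"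
      by (rule Henstock_Kurzweil_Integration.integral_combine) (use True p int in auto)
    moreover have "integral {p..a+p} f = integral {0..a} f" using sh[of 0 a] by simp
    ultimately show ?thesis by linarith
  next
    case False
    have "integral {a..a+p} f + integral {a+p..p} f = integral {a..p} f"
      by (rule Henstock_Kurzweil_Integration.integral_combine) (use False p int in auto)
    moreover have "integral {a..0} f + integral {0..p} f = integral {a..p} f"
      by (rule Henstock_Kurzweil_Integration.integral_combine) (use False p int in auto)
    moreover have "integral {a+p..p} f = integral {a..0} f" using sh[of a 0] by simp
    ultimately show ?thesis by linarith
  qed
qed

lemma periodic_shift_integral:
  fixes f :: "real \<Rightarrow> real"
  assumes cf: "continuous_on UNIV f" and per: "\<And>x. f (x + p) = f x" and p: "p \<ge> 0"
  shows "integral {0..p} (\<lambda>t. f (t + h)) = integral {0..p} f"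
proof -
  have "integral {0..p} (\<lambda>t. f (t + h)) = integral {0..p} (f \<circ> (\<lambda>x. x + h))" by (simp add: o_def)
  also have "\<dots> = integral {0+h..p+h} f"
    by (rule integral_shift) (use cf continuous_on_subset in blast)
  also have "\<dots> = integral {0..p} f" using periodic_window[OF cf per p, of h] by (simp add: add.commute)
  finally show ?thesis .
qed

lemma ftc_real:
  fixes f f' :: "real \<Rightarrow> real"
  assumes "a \<le> b" "\<And>x. (f has_real_derivative f' x) (at x)"
  shows "(f' has_integral (f b - f a)) {a..b}"
  by (rule fundamental_theorem_of_calculus[OF assms(1)])
     (auto simp: has_real_derivative_iff_has_vector_derivative[symmetric]
           intro: has_field_derivative_at_within assms(2))

lemma odd_integral_zero:
  fixes f :: "real \<Rightarrow> real"
  assumes "\<And>x. f (-x) = - f x"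
  shows "(\<integral>x. f x \<partial>lborel) = 0"
proof -
  have "(\<integral>x. f x \<partial>lborel) = \<bar>-1\<bar> *\<^sub>R (\<integral>x. f (0 + (-1) * x) \<partial>lborel)"
    by (rule lborel_integral_real_affine) simp
  also have "\<dots> = (\<integral>x. - f x \<partial>lborel)" using assms by simp
  also have "\<dots> = - (\<integral>x. f x \<partial>lborel)" by (rule Bochner_Integration.integral_minus)
  finally show ?thesis by simp
qed

lemma phi_odd:
  fixes u :: "real \<Rightarrow> real"
  assumes p: "p \<ge> 0" and per: "\<And>x. u (x + p) = u x"
    and du: "\<And>x. (u has_real_derivative deriv u x) (at x)"
    and cdu: "continuous_on UNIV (deriv u)"
    and dper: "\<And>x. deriv u (x + p) = deriv u x"
  shows "integral {0..p} (\<lambda>t. u (t + - h) * deriv u t) = - integral {0..p} (\<lambda>t. u (t + h) * deriv u t)"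
proof -
  have cu: "continuous_on UNIV u"
    using du by (meson DERIV_isCont continuous_at_imp_continuous_on)
  have step1: "integral {0..p} (\<lambda>t. u (t + k) * deriv u t) = - integral {0..p} (\<lambda>t. deriv u (t + k) * u t)" for k
  proof -
    have d: "((\<lambda>t. u (t + k) * u t) has_real_derivative (deriv u (t + k) * u t + u (t + k) * deriv u t)) (at t)" for t
    proof -
      have "((\<lambda>t. u (t + k)) has_real_derivative deriv u (t + k)) (at t)"
      proof -
        have "((\<lambda>t. t + k) has_real_derivative 1) (at t)" by (auto intro!: derivative_eq_intros)
        from DERIV_chain2[of u "deriv u (t + k)" "\<lambda>t. t + k" t 1 UNIV, OF du[of "t + k"] this]
        show ?thesis by simp
      qed
      then show ?thesis by (auto intro!: derivative_eq_intros du)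
    qed
    have "((\<lambda>t. deriv u (t + k) * u t + u (t + k) * deriv u t) has_integral (u (p + k) * u p - u (0 + k) * u 0)) {0..p}"
      by (rule ftc_real[OF p d])
    moreover have "u (p + k) * u p - u (0 + k) * u 0 = 0"
      using per[of k] per[of 0] by (simp add: add.commute)
    ultimately have h0: "((\<lambda>t. deriv u (t + k) * u t + u (t + k) * deriv u t) has_integral 0) {0..p}" by simp
    have c1: "continuous_on UNIV (\<lambda>t. deriv u (t + k))"
      by (rule continuous_on_compose2[OF cdu]) (auto intro: continuous_intros)
    have c2: "continuous_on UNIV (\<lambda>t. u (t + k))"
      by (rule continuous_on_compose2[OF cu]) (auto intro: continuous_intros)
    have i1: "(\<lambda>t. deriv u (t + k) * u t) integrable_on {0..p}"
      by (rule integrable_continuous_interval) (use c1 cu in \<open>auto intro!: continuous_intros intro: continuous_on_subset\<close>)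
    have i2: "(\<lambda>t. u (t + k) * deriv u t) integrable_on {0..p}"
      by (rule integrable_continuous_interval) (use c2 cdu in \<open>auto intro!: continuous_intros intro: continuous_on_subset\<close>)
    have "integral {0..p} (\<lambda>t. deriv u (t + k) * u t + u (t + k) * deriv u t) = 0"
      using h0 by (rule integral_unique)
    moreover have "integral {0..p} (\<lambda>t. deriv u (t + k) * u t + u (t + k) * deriv u t)
       = integral {0..p} (\<lambda>t. deriv u (t + k) * u t) + integral {0..p} (\<lambda>t. u (t + k) * deriv u t)"
      by (rule integral_add[OF i1 i2])
    ultimately show ?thesis by linarith
  qed
  define f where "f = (\<lambda>t. deriv u t * u (t + h))"
  have cf: "continuous_on UNIV f"
  proof -
    have c2: "continuous_on UNIV (\<lambda>t. u (t + h))"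
      by (rule continuous_on_compose2[OF cu]) (auto intro: continuous_intros)
    show ?thesis unfolding f_def using cdu c2 by (auto intro!: continuous_intros)
  qed
  have fper: "f (x + p) = f x" for x
    unfolding f_def using dper[of x] per[of "x + h"] by (simp add: algebra_simps)
  have "integral {0..p} (\<lambda>t. deriv u (t + - h) * u t) = integral {0..p} (\<lambda>t. f (t + - h))"
    unfolding f_def by simp
  also have "\<dots> = integral {0..p} f"
    by (rule periodic_shift_integral[OF cf fper p])
  also have "\<dots> = integral {0..p} (\<lambda>t. u (t + h) * deriv u t)"
    unfolding f_def by (simp add: mult.commute)
  finally show ?thesis using step1[of "-h"] by simp
qed

lemma WD_bound:
  fixes u :: "real \<Rightarrow> real" and s b M B :: real
  assumes  s: "0 < s" "s < 1" and b: "2 * s - 1 < b"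
    and M: "M \<ge> 0"
    and tay: "\<And>t h. \<bar>h\<bar> \<le> 1 \<Longrightarrow> \<bar>u (t + h) - u t - deriv u t * h\<bar> \<le> M * \<bar>h\<bar> powr (1 + b)"
    and B: "\<And>x. \<bar>u x\<bar> \<le> B"
  assumes W_def: "\<And>t h. W t h = (u t - u (t + h) + deriv u t * h * indicator {-1..1} h) / \<bar>h\<bar> powr (1 + 2 * s)"
  assumes D_def: "\<And>h. D h = indicator {-1..1} h * (M * \<bar>h\<bar> powr (b - 2 * s))
      + indicator {x. 1 < \<bar>x\<bar>} h * (2 * B * \<bar>h\<bar> powr (-1 - 2 * s))"
  shows "integrable lborel D" "\<bar>W t h\<bar> \<le> D h"
proof -
  have i1: "integrable lborel (\<lambda>x. indicator {-1..1} x * \<bar>x\<bar> powr (b - 2 * s))"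
    by (rule powr_integrable0) (use b in simp)
  have i2: "integrable lborel (\<lambda>x. indicator {x. 1 < \<bar>x\<bar>} x * \<bar>x\<bar> powr (-1 - 2 * s))"
    by (rule powr_integrable_inf) (use s in simp)
  have "integrable lborel (\<lambda>x. M * (indicator {-1..1} x * \<bar>x\<bar> powr (b - 2 * s)) + (2 * B) * (indicator {x. 1 < \<bar>x\<bar>} x * \<bar>x\<bar> powr (-1 - 2 * s)))"
    using i1 i2 by (intro Bochner_Integration.integrable_add integrable_mult_right)
  then show "integrable lborel D"
    by (rule Bochner_Integration.integrable_cong[THEN iffD1, rotated 2]) (auto simp: D_def)
  show "\<bar>W t h\<bar> \<le> D h"
  proof (cases "h = 0")
    case True then show ?thesis by (simp add: W_def D_def)
  next
    case False
    then have hp: "\<bar>h\<bar> > 0" by simp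
    have Kp: "\<bar>h\<bar> powr (1 + 2 * s) > 0" using hp by simp
    show ?thesis
    proof (cases "\<bar>h\<bar> \<le> 1")
      case True
      then have ind: "indicator {-1..1} h = (1::real)" "indicator {x. 1 < \<bar>x\<bar>} h = (0::real)"
        by (auto simp: indicator_def abs_le_iff)
      have "\<bar>W t h\<bar> = \<bar>u (t + h) - u t - deriv u t * h\<bar> / \<bar>h\<bar> powr (1 + 2 * s)"
        using Kp by (simp add: W_def ind abs_minus_commute[of "u t"] algebra_simps)
      also have "\<dots> \<le> M * \<bar>h\<bar> powr (1 + b) / \<bar>h\<bar> powr (1 + 2 * s)"
        using tay[OF True, of t] Kp by (simp add: divide_right_mono)
      also have "\<dots> = M * \<bar>h\<bar> powr (b - 2 * s)"
      proof -
        have "\<bar>h\<bar> powr (b - 2 * s) = \<bar>h\<bar> powr ((1 + b) - (1 + 2 * s))" by simp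
        also have "\<dots> = \<bar>h\<bar> powr (1 + b) / \<bar>h\<bar> powr (1 + 2 * s)" by (rule powr_diff)
        finally show ?thesis by simp
      qed
      finally show ?thesis by (simp add: D_def ind)
    next
      case False
      then have ind: "indicator {-1..1} h = (0::real)" "indicator {x. 1 < \<bar>x\<bar>} h = (1::real)"
        by (auto simp: indicator_def abs_le_iff)
      have "\<bar>W t h\<bar> = \<bar>u t - u (t + h)\<bar> / \<bar>h\<bar> powr (1 + 2 * s)"
        using Kp by (simp add: W_def ind)
      also have "\<dots> \<le> (2 * B) / \<bar>h\<bar> powr (1 + 2 * s)"
        using B[of t] B[of "t + h"] Kp by (intro divide_right_mono) auto
      also have "\<dots> = 2 * B * \<bar>h\<bar> powr (-1 - 2 * s)"
        using powr_minus_divide[of "\<bar>h\<bar>" "1 + 2 * s"] by (simp add: divide_inverse)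
      finally show ?thesis by (simp add: D_def ind)
    qed
  qed
qed

lemma J_eps:
  fixes u :: "real \<Rightarrow> real" and s e t :: real
  assumes s: "0 < s" and e: "0 < e"
    and cu: "continuous_on UNIV u"
    and [measurable]: "u \<in> borel_measurable borel"
    and si: "set_integrable lborel {z. e < \<bar>t - z\<bar>} (\<lambda>z. (u t - u z) / \<bar>t - z\<bar> powr (1 + 2 * s))"
  shows "(LINT z:{z. e < \<bar>t - z\<bar>}|lborel. (u t - u z) / \<bar>t - z\<bar> powr (1 + 2 * s))
       = (\<integral>h. indicator {h. e < \<bar>h\<bar>} h * ((u t - u (t + h) + c * h * indicator {-1..1} h) / \<bar>h\<bar> powr (1 + 2 * s)) \<partial>lborel)"
proof -
  define f where "f z = indicator {z. e < \<bar>t - z\<bar>} z *\<^sub>R ((u t - u z) / \<bar>t - z\<bar> powr (1 + 2 * s))" for z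
  define A where "A h = indicator {h. e < \<bar>h\<bar>} h * ((u t - u (t + h)) / \<bar>h\<bar> powr (1 + 2 * s))" for h
  define Bp where "Bp h = indicator {h. e < \<bar>h\<bar>} h * (h * indicator {-1..1} h / \<bar>h\<bar> powr (1 + 2 * s))" for h :: real
  have fA: "f (t + 1 * h) = A h" for h
    by (simp add: f_def A_def indicator_def)
  have fA': "(\<lambda>h. f (t + 1 * h)) = A" using fA by (simp add: fun_eq_iff)
  have ff: "f = (\<lambda>z. indicator {z. e < \<bar>t - z\<bar>} z *\<^sub>R ((u t - u z) / \<bar>t - z\<bar> powr (1 + 2 * s)))"
    by (rule ext) (simp add: f_def)
  have intf: "integrable lborel f" using si unfolding set_integrable_def ff .
  have intA: "integrable lborel A"
    using lborel_integrable_real_affine[OF intf, of 1 t] fA by simp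
  have "(LINT z:{z. e < \<bar>t - z\<bar>}|lborel. (u t - u z) / \<bar>t - z\<bar> powr (1 + 2 * s)) = (\<integral>z. f z \<partial>lborel)"
    by (simp add: set_lebesgue_integral_def f_def)
  also have "\<dots> = \<bar>1\<bar> *\<^sub>R (\<integral>h. f (t + 1 * h) \<partial>lborel)"
    by (rule lborel_integral_real_affine) simp
  also have "\<dots> = (\<integral>h. A h \<partial>lborel)" by (simp only: fA') simp
  finally have I1: "(LINT z:{z. e < \<bar>t - z\<bar>}|lborel. (u t - u z) / \<bar>t - z\<bar> powr (1 + 2 * s)) = (\<integral>h. A h \<partial>lborel)" .
  have Bm[measurable]: "Bp \<in> borel_measurable lborel" unfolding Bp_def by measurable
  have Bbound: "\<bar>Bp h\<bar> \<le> indicator {-1..1} h * (1 / e powr (1 + 2 * s))" for h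
  proof (cases "e < \<bar>h\<bar> \<and> \<bar>h\<bar> \<le> 1")
    case True
    then have hp: "\<bar>h\<bar> > 0" using e by linarith
    have "e powr (1 + 2 * s) \<le> \<bar>h\<bar> powr (1 + 2 * s)"
      using True e s by (intro powr_mono2) auto
    then have "\<bar>h\<bar> / \<bar>h\<bar> powr (1 + 2 * s) \<le> 1 / e powr (1 + 2 * s)"
      using True e hp by (intro frac_le) auto
    then show ?thesis using True by (auto simp: Bp_def indicator_def abs_le_iff abs_mult)
  next
    case False
    then show ?thesis by (auto simp: Bp_def indicator_def abs_le_iff)
  qed
  have intB: "integrable lborel Bp"
  proof (rule Bochner_Integration.integrable_bound)
    show "integrable lborel (\<lambda>h::real. indicator {-1..1} h * (1 / e powr (1 + 2 * s)))"
      by (intro integrable_mult_left) (use emeasure_lborel_Icc[of "-1" "1::real"] in \<open>auto simp: integrable_indicator_iff\<close>)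
    show "Bp \<in> borel_measurable lborel" by measurable
    show "AE x in lborel. norm (Bp x) \<le> norm (indicator {-1..1} x * (1 / e powr (1 + 2 * s)))"
      using Bbound by (auto intro!: AE_I2 intro: order_trans[OF _ abs_ge_self])
  qed
  have B0: "(\<integral>h. Bp h \<partial>lborel) = 0"
    by (rule odd_integral_zero) (auto simp: Bp_def indicator_def)
  have eq: "indicator {h. e < \<bar>h\<bar>} h * ((u t - u (t + h) + c * h * indicator {-1..1} h) / \<bar>h\<bar> powr (1 + 2 * s))
       = A h + c * Bp h" for h
    by (simp add: A_def Bp_def diff_divide_distrib add_divide_distrib algebra_simps)
  have "(\<integral>h. indicator {h. e < \<bar>h\<bar>} h * ((u t - u (t + h) + c * h * indicator {-1..1} h) / \<bar>h\<bar> powr (1 + 2 * s)) \<partial>lborel)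
      = (\<integral>h. A h + c * Bp h \<partial>lborel)" by (intro Bochner_Integration.integral_cong refl eq)
  also have "\<dots> = (\<integral>h. A h \<partial>lborel) + c * (\<integral>h. Bp h \<partial>lborel)"
    using intA intB by simp
  finally show ?thesis using I1 B0 by simp
qed

lemma J_lim:
  fixes u W D :: "real \<Rightarrow> real" and s t Lt c :: real
  assumes s: "0 < s"
    and cu: "continuous_on UNIV u"
    and um: "u \<in> borel_measurable borel"
    and pv: "pv_frac s u t Lt"
    and W_def: "\<And>h. W h = (u t - u (t + h) + c * h * indicator {-1..1} h) / \<bar>h\<bar> powr (1 + 2 * s)"
    and intD: "integrable lborel D" and WD: "\<And>h. \<bar>W h\<bar> \<le> D h"
    and Wm: "W \<in> borel_measurable lborel"
  shows "Lt = (\<integral>h. W h \<partial>lborel)"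
proof -
  define I where "I e = (LINT z:{z. e < \<bar>t - z\<bar>}|lborel. (u t - u z) / \<bar>t - z\<bar> powr (1 + 2 * s))" for e
  define ep where "ep n = inverse (real (Suc n))" for n
  have ep_pos: "ep n > 0" for n by (simp add: ep_def)
  have ep_lim: "ep \<longlonglongrightarrow> 0" unfolding ep_def by (rule LIMSEQ_inverse_real_of_nat)
  have ep_at: "filterlim ep (at_right 0) sequentially"
    by (rule tendsto_imp_filterlim_at_right[OF ep_lim]) (simp add: ep_pos)
  have pvI: "(I \<longlongrightarrow> Lt) (at_right 0)" and si: "\<And>e. e > 0 \<Longrightarrow> set_integrable lborel {z. e < \<bar>t - z\<bar>} (\<lambda>z. (u t - u z) / \<bar>t - z\<bar> powr (1 + 2 * s))"
    using pv unfolding pv_frac_def I_def by auto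
  have lim1: "(\<lambda>n. I (ep n)) \<longlonglongrightarrow> Lt"
    by (rule filterlim_compose[OF pvI ep_at])
  have IJ: "I (ep n) = (\<integral>h. indicator {h. ep n < \<bar>h\<bar>} h * W h \<partial>lborel)" for n
    unfolding I_def W_def using J_eps[OF s ep_pos cu um si[OF ep_pos]] .
  have [measurable]: "W \<in> borel_measurable borel" using Wm by simp
  have lim2: "(\<lambda>n. (\<integral>h. indicator {h. ep n < \<bar>h\<bar>} h * W h \<partial>lborel)) \<longlonglongrightarrow> (\<integral>h. W h \<partial>lborel)"
  proof (rule integral_dominated_convergence[where w = D])
    show "W \<in> borel_measurable lborel" by (rule Wm)
    show "(\<lambda>h. indicator {h. ep n < \<bar>h\<bar>} h * W h) \<in> borel_measurable lborel" for n
      by measurable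
    show "integrable lborel D" by (rule intD)
    show "AE x in lborel. norm (indicator {h. ep n < \<bar>h\<bar>} x * W x) \<le> D x" for n
      using WD by (auto intro!: AE_I2 simp: indicator_def abs_mult intro: order_trans[OF _ WD])
    show "AE x in lborel. (\<lambda>n. indicator {h. ep n < \<bar>h\<bar>} x * W x) \<longlonglongrightarrow> W x"
    proof (rule AE_I2)
      fix x :: real
      show "(\<lambda>n. indicator {h. ep n < \<bar>h\<bar>} x * W x) \<longlonglongrightarrow> W x"
      proof (cases "x = 0")
        case True
        then have "W x = 0" by (simp add: W_def)
        then show ?thesis by simp
      next
        case False
        then have "eventually (\<lambda>n. ep n < \<bar>x\<bar>) sequentially"
          using order_tendstoD(2)[OF ep_lim, of "\<bar>x\<bar>"] by simp
        then have "eventually (\<lambda>n. indicator {h. ep n < \<bar>h\<bar>} x * W x = W x) sequentially"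
          by eventually_elim (simp add: indicator_def)
        then show ?thesis by (rule tendsto_eventually)
      qed
    qed
  qed
  have "(\<lambda>n. I (ep n)) \<longlonglongrightarrow> (\<integral>h. W h \<partial>lborel)" using lim2 by (simp add: IJ)
  with lim1 show ?thesis by (rule LIMSEQ_unique)
qed

lemma frac_core:
  fixes u L :: "real \<Rightarrow> real" and s b M B B1 p :: real
  assumes p: "p > 0" and per: "\<And>x. u (x + p) = u x"
    and du: "\<And>x. (u has_real_derivative deriv u x) (at x)"
    and cdu: "continuous_on UNIV (deriv u)"
    and dper: "\<And>x. deriv u (x + p) = deriv u x"
    and s: "0 < s" "s < 1" and b: "2 * s - 1 < b"
    and M: "M \<ge> 0"
    and tay: "\<And>t h. \<bar>h\<bar> \<le> 1 \<Longrightarrow> \<bar>u (t + h) - u t - deriv u t * h\<bar> \<le> M * \<bar>h\<bar> powr (1 + b)"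
    and B: "\<And>x. \<bar>u x\<bar> \<le> B" and B1: "\<And>x. \<bar>deriv u x\<bar> \<le> B1"
    and pv: "\<And>t. pv_frac s u t (L t)"
    and cL: "continuous_on UNIV L"
  shows "integral {0..p} L = 0 \<and> integral {0..p} (\<lambda>t. L t * deriv u t) = 0"
proof -
  have cu: "continuous_on UNIV u"
    using du by (meson DERIV_isCont continuous_at_imp_continuous_on)
  have [measurable]: "u \<in> borel_measurable borel" "deriv u \<in> borel_measurable borel"
    using cu cdu by (auto intro: borel_measurable_continuous_onI)
  define W where "W t h = (u t - u (t + h) + deriv u t * h * indicator {-1..1} h) / \<bar>h\<bar> powr (1 + 2 * s)" for t h
  define D where "D h = indicator {-1..1} h * (M * \<bar>h\<bar> powr (b - 2 * s))
      + indicator {x. 1 < \<bar>x\<bar>} h * (2 * B * \<bar>h\<bar> powr (-1 - 2 * s))" for h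
  have Wm[measurable]: "(\<lambda>(t, h). W t h) \<in> borel_measurable (lborel \<Otimes>\<^sub>M lborel)"
    unfolding W_def by measurable
  have Wm1[measurable]: "W t \<in> borel_measurable lborel" for t
    unfolding W_def by measurable
  have intD: "integrable lborel D"
    by (rule WD_bound(1)[OF s b M tay B W_def D_def])
  have WD: "\<bar>W t h\<bar> \<le> D h" for t h
    by (rule WD_bound(2)[OF s b M tay B W_def D_def])
  have intW: "integrable lborel (W t)" for t
    by (rule Bochner_Integration.integrable_bound[OF intD]) (use WD in \<open>auto intro!: AE_I2 intro: order_trans[OF _ abs_ge_self]\<close>)
  have J: "L t = (\<integral>h. W t h \<partial>lborel)" for t
    by (rule J_lim[OF s(1) cu _ pv[of t] W_def intD WD Wm1]) simp
  have fub: "(\<integral>t. (\<integral>h. indicator {0..p} t * W t h * G t \<partial>lborel) \<partial>lborel)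
      = (\<integral>h. (\<integral>t. indicator {0..p} t * W t h * G t \<partial>lborel) \<partial>lborel)"
    if cG: "continuous_on UNIV G" and bG: "\<And>t. \<bar>G t\<bar> \<le> Gb" for G Gb
  proof -
    have [measurable]: "G \<in> borel_measurable borel" using cG by (rule borel_measurable_continuous_onI)
    define F where "F = (\<lambda>(t, h). indicator {0..p} t * W t h * G t)"
    have Fm[measurable]: "F \<in> borel_measurable (lborel \<Otimes>\<^sub>M lborel)"
      unfolding F_def by measurable
    have Fm2[measurable]: "(\<lambda>(t, h). norm (F (t, h))) \<in> borel_measurable (lborel \<Otimes>\<^sub>M lborel)"
      by measurable
    have Gb0: "Gb \<ge> 0" using bG[of 0] by linarith
    have intabsW: "integrable lborel (\<lambda>h. \<bar>W t h\<bar>)" for t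
      using intW[of t] by (rule integrable_abs)
    have ID: "(\<integral>h. \<bar>W t h\<bar> \<partial>lborel) \<le> (\<integral>h. D h \<partial>lborel)" for t
      by (rule integral_mono[OF intabsW intD]) (use WD in auto)
    have nF: "(\<integral>h. \<bar>F (t, h)\<bar> \<partial>lborel) = (indicator {0..p} t * \<bar>G t\<bar>) * (\<integral>h. \<bar>W t h\<bar> \<partial>lborel)" for t
    proof -
      have "(\<lambda>h. \<bar>F (t, h)\<bar>) = (\<lambda>h. (indicator {0..p} t * \<bar>G t\<bar>) * \<bar>W t h\<bar>)"
        by (rule ext) (simp add: F_def abs_mult)
      then show ?thesis by simp
    qed
    have i1: "integrable lborel (\<lambda>t. \<integral>h. norm (F (t, h)) \<partial>lborel)"
    proof (rule Bochner_Integration.integrable_bound)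
      show "integrable lborel (\<lambda>t::real. indicator {0..p} t * (Gb * (\<integral>h. D h \<partial>lborel)))"
        by (intro integrable_mult_left) (use emeasure_lborel_Icc[of 0 p] p in \<open>auto simp: integrable_indicator_iff\<close>)
      show "(\<lambda>t. \<integral>h. norm (F (t, h)) \<partial>lborel) \<in> borel_measurable lborel"
        by measurable
      show "AE t in lborel. norm (\<integral>h. norm (F (t, h)) \<partial>lborel) \<le> norm (indicator {0..p} t * (Gb * (\<integral>h. D h \<partial>lborel)))"
      proof (rule AE_I2)
        fix t :: real
        have a: "0 \<le> (\<integral>h. \<bar>W t h\<bar> \<partial>lborel)" by (rule integral_nonneg_AE) auto
        have "\<bar>G t\<bar> * (\<integral>h. \<bar>W t h\<bar> \<partial>lborel) \<le> Gb * (\<integral>h. D h \<partial>lborel)"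
          using bG[of t] ID[of t] a Gb0 by (intro mult_mono) auto
        then show "norm (\<integral>h. norm (F (t, h)) \<partial>lborel) \<le> norm (indicator {0..p} t * (Gb * (\<integral>h. D h \<partial>lborel)))"
          using a nF[of t] Gb0 by (auto simp: indicator_def)
      qed
    qed
    have i2: "AE t in lborel. integrable lborel (\<lambda>h. F (t, h))"
    proof (rule AE_I2)
      fix t
      have "integrable lborel (\<lambda>h. (indicator {0..p} t * G t) * W t h)"
        by (intro integrable_mult_right intW)
      then show "integrable lborel (\<lambda>h. F (t, h))"
        by (simp add: F_def mult_ac)
    qed
    have "integrable (lborel \<Otimes>\<^sub>M lborel) F"
      by (rule lborel_pair.Fubini_integrable[OF Fm i1 i2])
    then have "integrable (lborel \<Otimes>\<^sub>M lborel) (case_prod (\<lambda>t h. indicator {0..p} t * W t h * G t))"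
      by (simp add: F_def)
    from lborel_pair.Fubini_integral[OF this] show ?thesis by simp
  qed
  have lhs: "(\<integral>t. (\<integral>h. indicator {0..p} t * W t h * G t \<partial>lborel) \<partial>lborel) = integral {0..p} (\<lambda>t. L t * G t)"
    if cG: "continuous_on UNIV G" for G
  proof -
    have inner: "(\<integral>h. indicator {0..p} t * W t h * G t \<partial>lborel) = indicator {0..p} t * (L t * G t)" for t
    proof -
      have "(\<lambda>h. indicator {0..p} t * W t h * G t) = (\<lambda>h. (indicator {0..p} t * G t) * W t h)"
        by (rule ext) (simp add: mult_ac)
      then show ?thesis using J[of t] by (simp add: mult_ac)
    qed
    have cLG: "continuous_on {0..p} (\<lambda>t. L t * G t)"
      using cL cG by (auto intro!: continuous_intros intro: continuous_on_subset)
    have "(\<integral>t. (\<integral>h. indicator {0..p} t * W t h * G t \<partial>lborel) \<partial>lborel) = (LINT t:{0..p}|lborel. L t * G t)"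
      by (simp only: inner) (simp add: set_lebesgue_integral_def)
    also have "\<dots> = integral {0..p} (\<lambda>t. L t * G t)"
      by (rule set_borel_integral_eq_integral(2)[OF borel_integrable_atLeastAtMost'[OF cLG]])
    finally show ?thesis .
  qed
  have cW: "continuous_on UNIV (\<lambda>t. W t h)" for h
  proof -
    have c2: "continuous_on UNIV (\<lambda>t. u (t + h))"
      by (rule continuous_on_compose2[OF cu]) (auto intro: continuous_intros)
    show ?thesis
    proof (cases "h = 0")
      case True then show ?thesis by (simp add: W_def)
    next
      case False
      then show ?thesis unfolding W_def using cu cdu c2 by (auto intro!: continuous_intros)
    qed
  qed
  have rhs: "(\<integral>t. indicator {0..p} t * W t h * G t \<partial>lborel) = integral {0..p} (\<lambda>t. W t h * G t)"
    if cG: "continuous_on UNIV G" for G h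
  proof -
    have cWG: "continuous_on {0..p} (\<lambda>t. W t h * G t)"
      using cW[of h] cG by (auto intro!: continuous_intros intro: continuous_on_subset)
    have "(\<integral>t. indicator {0..p} t * W t h * G t \<partial>lborel) = (LINT t:{0..p}|lborel. W t h * G t)"
      by (simp add: set_lebesgue_integral_def mult_ac)
    also have "\<dots> = integral {0..p} (\<lambda>t. W t h * G t)"
      by (rule set_borel_integral_eq_integral(2)[OF borel_integrable_atLeastAtMost'[OF cWG]])
    finally show ?thesis .
  qed
  have cuh: "continuous_on UNIV (\<lambda>t. u (t + h))" for h
    by (rule continuous_on_compose2[OF cu]) (auto intro: continuous_intros)
  have Hu: "(u has_integral integral {0..p} u) {0..p}"
    by (rule integrable_integral, rule integrable_continuous_interval) (use cu continuous_on_subset in blast)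
  have Huh: "((\<lambda>t. u (t + h)) has_integral integral {0..p} u) {0..p}" for h
  proof -
    have "(\<lambda>t. u (t + h)) integrable_on {0..p}"
      by (rule integrable_continuous_interval) (use cuh continuous_on_subset in blast)
    then show ?thesis using periodic_shift_integral[OF cu per, of h] p
      by (metis integrable_integral less_imp_le)
  qed
  have Hdu: "(deriv u has_integral 0) {0..p}"
    using ftc_real[of 0 p u "deriv u", OF _ du] p per[of 0] by simp
  have A0: "integral {0..p} (\<lambda>t. W t h * 1) = 0" for h
  proof -
    have "((\<lambda>t. (u t - u (t + h) + deriv u t * (h * indicator {-1..1} h)) / \<bar>h\<bar> powr (1 + 2 * s)) has_integral
        ((integral {0..p} u - integral {0..p} u + 0 * (h * indicator {-1..1} h)) / \<bar>h\<bar> powr (1 + 2 * s))) {0..p}"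
      by (intro has_integral_divide has_integral_add has_integral_diff has_integral_mult_left Hu Huh Hdu)
    then have "((\<lambda>t. W t h * 1) has_integral 0) {0..p}"
      by (simp add: W_def mult.assoc)
    then show ?thesis by (rule integral_unique)
  qed
  define \<phi> where "\<phi> h = integral {0..p} (\<lambda>t. u (t + h) * deriv u t)" for h
  define Q where "Q = integral {0..p} (\<lambda>t. deriv u t * deriv u t)"
  have B0: "integral {0..p} (\<lambda>t. W t h * deriv u t) = (- \<phi> h + h * indicator {-1..1} h * Q) / \<bar>h\<bar> powr (1 + 2 * s)" for h
  proof -
    have duu: "((\<lambda>t. u t * u t / 2) has_real_derivative u t * deriv u t) (at t)" for t
      by (auto intro!: derivative_eq_intros du simp: field_simps)
    have H1: "((\<lambda>t. u t * deriv u t) has_integral 0) {0..p}"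
      using ftc_real[of 0 p "\<lambda>t. u t * u t / 2", OF _ duu] p per[of 0] by simp
    have H2: "((\<lambda>t. u (t + h) * deriv u t) has_integral \<phi> h) {0..p}"
      unfolding \<phi>_def
      by (rule integrable_integral, rule integrable_continuous_interval)
         (use cuh[of h] cdu in \<open>auto intro!: continuous_intros intro: continuous_on_subset\<close>)
    have H3: "((\<lambda>t. deriv u t * deriv u t) has_integral Q) {0..p}"
      unfolding Q_def
      by (rule integrable_integral, rule integrable_continuous_interval)
         (use cdu in \<open>auto intro!: continuous_intros intro: continuous_on_subset\<close>)
    have "((\<lambda>t. (u t * deriv u t - u (t + h) * deriv u t + (deriv u t * deriv u t) * (h * indicator {-1..1} h)) / \<bar>h\<bar> powr (1 + 2 * s)) has_integral
        ((0 - \<phi> h + Q * (h * indicator {-1..1} h)) / \<bar>h\<bar> powr (1 + 2 * s))) {0..p}"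
      by (intro has_integral_divide has_integral_add has_integral_diff has_integral_mult_left H1 H2 H3)
    moreover have "(\<lambda>t. (u t * deriv u t - u (t + h) * deriv u t + (deriv u t * deriv u t) * (h * indicator {-1..1} h)) / \<bar>h\<bar> powr (1 + 2 * s))
        = (\<lambda>t. W t h * deriv u t)"
      by (rule ext) (simp add: W_def algebra_simps add_divide_distrib diff_divide_distrib)
    ultimately have "((\<lambda>t. W t h * deriv u t) has_integral ((0 - \<phi> h + Q * (h * indicator {-1..1} h)) / \<bar>h\<bar> powr (1 + 2 * s))) {0..p}"
      by simp
    then show ?thesis by (simp add: integral_unique mult_ac)
  qed
  have phiodd: "\<phi> (-h) = - \<phi> h" for h
    unfolding \<phi>_def using phi_odd[OF _ per du cdu dper, of h] p by simp
  have "integral {0..p} (\<lambda>t. L t * 1) = 0"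
    using fub[of "\<lambda>_. 1" 1] lhs[of "\<lambda>_. 1"] rhs[of "\<lambda>_. 1"] A0 by simp
  moreover have "integral {0..p} (\<lambda>t. L t * deriv u t) = 0"
  proof -
    have "integral {0..p} (\<lambda>t. L t * deriv u t) = (\<integral>h. (- \<phi> h + h * indicator {-1..1} h * Q) / \<bar>h\<bar> powr (1 + 2 * s) \<partial>lborel)"
      using fub[OF cdu B1] lhs[OF cdu] rhs[OF cdu] B0 by simp
    also have "\<dots> = 0"
      by (rule odd_integral_zero) (auto simp: phiodd indicator_def diff_divide_distrib)
    finally show ?thesis .
  qed
  ultimately show ?thesis by simp
qed

lemma periodic_nat:
  fixes f :: "real \<Rightarrow> 'b"
  assumes per: "\<And>x. f (x + p) = f x"
  shows "f (x + real n * p) = f x"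
proof (induction n arbitrary: x)
  case 0 then show ?case by simp
next
  case (Suc n)
  have "f (x + real (Suc n) * p) = f ((x + real n * p) + p)" by (simp add: algebra_simps)
  also have "\<dots> = f x" using per Suc by simp
  finally show ?case .
qed

lemma periodic_int:
  fixes f :: "real \<Rightarrow> 'b"
  assumes per: "\<And>x. f (x + p) = f x"
  shows "f (x + real_of_int n * p) = f x"
proof (cases n rule: int_cases)
  case (nonneg m)
  then show ?thesis using periodic_nat[of f p, OF per, of x m] by simp
next
  case (neg m)
  have rn: "real_of_int n = - real (Suc m)" using neg by simp
  have eq: "x + real_of_int n * p = x - real (Suc m) * p"
    unfolding rn by (simp only: mult_minus_left diff_conv_add_uminus)
  have "f x = f ((x - real (Suc m) * p) + real (Suc m) * p)" by simp
  also have "\<dots> = f (x - real (Suc m) * p)" by (rule periodic_nat[of f p, OF per])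
  finally have "f (x - real (Suc m) * p) = f x" by (rule sym)
  then show ?thesis by (simp only: eq)
qed

lemma periodic_reduce:
  fixes f :: "real \<Rightarrow> 'b"
  assumes per: "\<And>x. f (x + p) = f x" and p: "p > 0"
  shows "\<exists>y\<in>{0..p}. f x = f y"
proof -
  define y where "y = x - real_of_int \<lfloor>x / p\<rfloor> * p"
  have "real_of_int \<lfloor>x / p\<rfloor> \<le> x / p" by (rule of_int_floor_le)
  then have "real_of_int \<lfloor>x / p\<rfloor> * p \<le> x / p * p" using p by (intro mult_right_mono) auto
  then have y0: "0 \<le> y" using p by (simp add: y_def)
  have "x / p < real_of_int \<lfloor>x / p\<rfloor> + 1" by (rule real_of_int_floor_add_one_gt)
  then have "x / p * p < (real_of_int \<lfloor>x / p\<rfloor> + 1) * p" using p by (intro mult_strict_right_mono) auto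
  then have y1: "y \<le> p" using p by (simp add: y_def algebra_simps)
  have "f y = f (y + real_of_int \<lfloor>x / p\<rfloor> * p)" by (rule periodic_int[of f p, OF per, symmetric])
  then have "f x = f y" by (simp add: y_def)
  then show ?thesis using y0 y1 by auto
qed

lemma periodic_bounds:
  fixes f :: "real \<Rightarrow> real"
  assumes cf: "continuous_on UNIV f" and per: "\<And>x. f (x + p) = f x" and p: "p > 0"
  shows "\<exists>x0\<in>{0..p}. \<forall>x. f x0 \<le> f x" "\<exists>x1\<in>{0..p}. \<forall>x. f x \<le> f x1"
proof -
  have c: "continuous_on {0..p} f" using cf continuous_on_subset by blast
  obtain x0 where x0: "x0 \<in> {0..p}" "\<And>y. y \<in> {0..p} \<Longrightarrow> f x0 \<le> f y"
    using continuous_attains_inf[OF compact_Icc _ c] p by auto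
  obtain x1 where x1: "x1 \<in> {0..p}" "\<And>y. y \<in> {0..p} \<Longrightarrow> f y \<le> f x1"
    using continuous_attains_sup[OF compact_Icc _ c] p by auto
  have "\<forall>x. f x0 \<le> f x"
  proof
    fix x obtain y where "y \<in> {0..p}" "f x = f y" using periodic_reduce[of f p, OF per p, of x] by blast
    then show "f x0 \<le> f x" using x0(2) by simp
  qed
  then show "\<exists>x0\<in>{0..p}. \<forall>x. f x0 \<le> f x" using x0(1) by blast
  have "\<forall>x. f x \<le> f x1"
  proof
    fix x obtain y where "y \<in> {0..p}" "f x = f y" using periodic_reduce[of f p, OF per p, of x] by blast
    then show "f x \<le> f x1" using x1(2) by simp
  qed
  then show "\<exists>x1\<in>{0..p}. \<forall>x. f x \<le> f x1" using x1(1) by blast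
qed

lemma periodic_abs_bound:
  fixes f :: "real \<Rightarrow> real"
  assumes cf: "continuous_on UNIV f" and per: "\<And>x. f (x + p) = f x" and p: "p > 0"
  shows "\<exists>B. \<forall>x. \<bar>f x\<bar> \<le> B"
proof -
  obtain x0 x1 where a: "\<forall>x. f x0 \<le> f x" and b: "\<forall>x. f x \<le> f x1"
    using periodic_bounds[OF cf per p] by blast
  have "\<bar>f x\<bar> \<le> \<bar>f x0\<bar> + \<bar>f x1\<bar>" for x using a[rule_format, of x] b[rule_format, of x] by linarith
  then show ?thesis by blast
qed

lemma deriv_periodic:
  fixes f :: "real \<Rightarrow> real"
  assumes df: "\<And>x. (f has_real_derivative deriv f x) (at x)" and per: "\<And>x. f (x + p) = f x"
  shows "deriv f (x + p) = deriv f x"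
proof -
  have "((\<lambda>t. t + p) has_real_derivative 1) (at x)" by (auto intro!: derivative_eq_intros)
  from DERIV_chain2[of f "deriv f (x + p)" "\<lambda>t. t + p" x 1 UNIV, OF df[of "x + p"] this]
  have "((\<lambda>t. f (t + p)) has_real_derivative deriv f (x + p)) (at x)" by simp
  then have "(f has_real_derivative deriv f (x + p)) (at x)" using per by simp
  then show ?thesis using df[of x] by (rule DERIV_unique)
qed

lemma holder_cont:
  fixes f :: "real \<Rightarrow> real"
  assumes b: "0 < b" and h: "holder_on b S f"
  shows "continuous_on S f"
proof -
  obtain M where M: "\<And>x y. x \<in> S \<Longrightarrow> y \<in> S \<Longrightarrow> \<bar>f x - f y\<bar> \<le> M * \<bar>x - y\<bar> powr b"
    using h unfolding holder_on_def by blast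
  define M' where "M' = \<bar>M\<bar> + 1"
  have M'p: "M' > 0" by (simp add: M'_def)
  have M2: "\<bar>f x - f y\<bar> \<le> M' * \<bar>x - y\<bar> powr b" if "x \<in> S" "y \<in> S" for x y
  proof -
    have "M * \<bar>x - y\<bar> powr b \<le> M' * \<bar>x - y\<bar> powr b"
      by (intro mult_right_mono) (auto simp: M'_def)
    then show ?thesis using M[OF that] by linarith
  qed
  show ?thesis
    unfolding continuous_on_iff
  proof (intro ballI allI impI)
    fix x e :: real assume x: "x \<in> S" and e: "0 < e"
    define d where "d = (e / M') powr (1 / b)"
    have dp: "d > 0" using e M'p by (simp add: d_def)
    have dpow: "d powr b = e / M'" using e M'p b
      by (simp add: d_def powr_powr)
    show "\<exists>d>0. \<forall>x'\<in>S. dist x' x < d \<longrightarrow> dist (f x') (f x) < e"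
    proof (intro exI[of _ d] conjI ballI impI dp)
      fix x' assume x': "x' \<in> S" and dx: "dist x' x < d"
      have "\<bar>x' - x\<bar> powr b < d powr b"
      proof (cases "x' = x")
        case True then show ?thesis using dp by simp
      next
        case False then show ?thesis using dx b by (intro powr_less_mono2) (auto simp: dist_real_def)
      qed
      then have "M' * \<bar>x' - x\<bar> powr b < e" using dpow M'p by (simp add: field_simps)
      then show "dist (f x') (f x) < e" using M2[OF x' x] by (simp add: dist_real_def)
    qed
  qed
qed

lemma lip_bound:
  fixes f :: "real \<Rightarrow> real"
  assumes df: "\<And>x. (f has_real_derivative f' x) (at x)" and K: "\<And>x. \<bar>f' x\<bar> \<le> K"
  shows "\<bar>f x - f y\<bar> \<le> K * \<bar>x - y\<bar>"
proof -
  have *: "\<bar>f b - f a\<bar> \<le> K * \<bar>b - a\<bar>" if ab: "a < b" for a b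
  proof -
    obtain z where "f b - f a = (b - a) * f' z" using MVT2[OF ab, of f f'] df by blast
    then have "\<bar>f b - f a\<bar> = \<bar>b - a\<bar> * \<bar>f' z\<bar>" by (simp add: abs_mult)
    also have "\<dots> \<le> \<bar>b - a\<bar> * K" using K[of z] by (intro mult_left_mono) auto
    finally show ?thesis by (simp add: mult.commute)
  qed
  show ?thesis
  proof (cases x y rule: linorder_cases)
    case less then show ?thesis using *[of x y] by (simp add: abs_minus_commute)
  next
    case equal then show ?thesis by simp
  next
    case greater then show ?thesis using *[of y x] by (simp add: abs_minus_commute)
  qed
qed

lemma taylor_holder:
  fixes u :: "real \<Rightarrow> real"
  assumes du: "\<And>x. (u has_real_derivative deriv u x) (at x)"
    and hol: "\<And>x y. \<bar>x - y\<bar> \<le> 1 \<Longrightarrow> \<bar>deriv u x - deriv u y\<bar> \<le> M * \<bar>x - y\<bar> powr b"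
    and M: "M \<ge> 0" and b: "b > 0" and h: "\<bar>h\<bar> \<le> 1"
  shows "\<bar>u (t + h) - u t - deriv u t * h\<bar> \<le> M * \<bar>h\<bar> powr (1 + b)"
proof -
  have main: "\<bar>u (t + h) - u t - deriv u t * h\<bar> \<le> M * \<bar>h\<bar> powr (1 + b)"
    if z: "u (t + h) - u t = h * deriv u z" and zh: "\<bar>z - t\<bar> \<le> \<bar>h\<bar>" for z
  proof -
    have "u (t + h) - u t - deriv u t * h = h * (deriv u z - deriv u t)"
      using z by (simp add: algebra_simps)
    then have "\<bar>u (t + h) - u t - deriv u t * h\<bar> = \<bar>h\<bar> * \<bar>deriv u z - deriv u t\<bar>"
      by (simp add: abs_mult)
    also have "\<dots> \<le> \<bar>h\<bar> * (M * \<bar>z - t\<bar> powr b)"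
      using hol[of z t] zh h by (intro mult_left_mono) linarith+
    also have "\<dots> \<le> \<bar>h\<bar> * (M * \<bar>h\<bar> powr b)"
    proof -
      have "\<bar>z - t\<bar> powr b \<le> \<bar>h\<bar> powr b" by (rule powr_mono2) (use zh b in auto)
      then have "M * \<bar>z - t\<bar> powr b \<le> M * \<bar>h\<bar> powr b" using M by (rule mult_left_mono)
      then show ?thesis by (rule mult_left_mono) simp
    qed
    also have "\<dots> = M * \<bar>h\<bar> powr (1 + b)"
    proof (cases "h = 0")
      case True then show ?thesis by simp
    next
      case False then show ?thesis by (simp add: powr_add)
    qed
    finally show ?thesis .
  qed
  show ?thesis
  proof (cases h "0::real" rule: linorder_cases)
    case less
    obtain z where z: "t + h < z" "z < t" "u t - u (t + h) = (t - (t + h)) * deriv u z"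
      using MVT2[of "t + h" t u "deriv u"] less du by auto
    have e1: "u (t + h) - u t = h * deriv u z" using z(3) by (simp add: algebra_simps)
    have e2: "\<bar>z - t\<bar> \<le> \<bar>h\<bar>" using z(1,2) less by linarith
    show ?thesis by (rule main[OF e1 e2])
  next
    case equal then show ?thesis by simp
  next
    case greater
    obtain z where z: "t < z" "z < t + h" "u (t + h) - u t = (t + h - t) * deriv u z"
      using MVT2[of t "t + h" u "deriv u"] greater du by auto
    have e1: "u (t + h) - u t = h * deriv u z" using z(3) by (simp add: algebra_simps)
    have e2: "\<bar>z - t\<bar> \<le> \<bar>h\<bar>" using z(1,2) greater by linarith
    show ?thesis by (rule main[OF e1 e2])
  qed
qed

lemma amgm_aux:
  fixes c x d :: real assumes c: "c > 0"
  shows "x * d \<le> c / 2 * d\<^sup>2 + x\<^sup>2 / (2 * c)"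
proof -
  have "0 \<le> (c * d - x)\<^sup>2" by simp
  then have h: "2 * c * (x * d) \<le> c * (c * d\<^sup>2) + x\<^sup>2" by (simp add: power2_eq_square algebra_simps)
  have "c / 2 * d\<^sup>2 + x\<^sup>2 / (2 * c) = (c * (c * d\<^sup>2) + x\<^sup>2) / (2 * c)" using c by (simp add: field_simps power2_eq_square)
  moreover have "x * d \<le> (c * (c * d\<^sup>2) + x\<^sup>2) / (2 * c)"
    using h c by (simp add: pos_le_divide_eq mult.commute)
  ultimately show ?thesis by simp
qed
lemma abs_le_sq_aux:
  fixes d :: real shows "\<bar>d\<bar> \<le> (1 + d\<^sup>2) / 2"
proof -
  have "0 \<le> (\<bar>d\<bar> - 1)\<^sup>2" by simp
  then show ?thesis by (simp add: power2_eq_square algebra_simps abs_mult_self_eq)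
qed

lemma solution_bounds:
  fixes s a c lam T0 :: real and e g u :: "real \<Rightarrow> real"
  assumes s: "1/2 < s" "s < 1" and a: "0 < a" "a < 1" and c: "c > 0"
    and ce: "continuous_on UNIV e" and e_per: "\<forall>t. e (t + 2 * pi) = e t"
    and cg: "continuous_on {0<..} g"
    and T0: "\<And>t. t \<ge> T0 \<Longrightarrow> g t + integral {0..2*pi} e / (2 * pi) < 0"
    and lam: "0 < lam" "lam < 1" and upos: "\<forall>t. u t > 0" and uper: "\<forall>t. u (t + 2 * pi) = u t"
    and sol: "classical_solution s a c lam g e u"
  shows "(\<forall>t. u t < T0 + (2 * pi + integral {0..2*pi} (\<lambda>t. (e t)\<^sup>2) / c\<^sup>2) / 2 + 1) \<and>
         sqrt (integral {0..2*pi} (\<lambda>t. (deriv u t)\<^sup>2)) \<le> 1 / c * sqrt (integral {0..2*pi} (\<lambda>t. (e t)\<^sup>2))"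
proof -
  define p where "p = 2 * pi"
  have p: "p > 0" by (simp add: p_def)
  have per: "\<And>x. u (x + p) = u x" using uper by (simp add: p_def)
  have eper: "\<And>x. e (x + p) = e x" using e_per by (simp add: p_def)
  have hs: "holder_space (2 * s + a) u" and eqn: "\<And>t. \<exists>v. has_pos_frac_lap s u t v \<and> v + c * deriv u t - lam * g (u t) = lam * e t"
    using sol unfolding classical_solution_def by auto
  obtain bb M0 where du: "\<And>x. (u has_real_derivative deriv u x) (at x)"
    and cdu: "continuous_on UNIV (deriv u)"
    and bb: "2 * s - 1 < bb" "0 < bb" and M0: "M0 \<ge> 0"
    and hol: "\<And>x y. \<bar>x - y\<bar> \<le> 1 \<Longrightarrow> \<bar>deriv u x - deriv u y\<bar> \<le> M0 * \<bar>x - y\<bar> powr bb"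
  proof -
    have "\<exists>bb M0. (\<forall>x. (u has_real_derivative deriv u x) (at x)) \<and> continuous_on UNIV (deriv u) \<and>
       2 * s - 1 < bb \<and> 0 < bb \<and> M0 \<ge> 0 \<and>
       (\<forall>x y. \<bar>x - y\<bar> \<le> 1 \<longrightarrow> \<bar>deriv u x - deriv u y\<bar> \<le> M0 * \<bar>x - y\<bar> powr bb)"
    proof (cases "2 * s + a \<le> 2")
      case True
      have cei: "\<lceil>2 * s + a\<rceil> = 2" by (rule ceiling_unique) (use True s a in auto)
      have h1: "\<forall>j<nat 2 - 1. \<forall>x. (deriv ^^ j) u differentiable (at x)"
        and h2: "holder_on (2 * s + a - real (nat 2 - 1)) UNIV ((deriv ^^ (nat 2 - 1)) u)"
        using hs unfolding holder_space_def Let_def cei by auto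
      have diff: "\<forall>x. u differentiable (at x)" using h1 by simp
      have hol2: "holder_on (2 * s + a - 1) UNIV (deriv u)" using h2 by simp
      have du': "\<forall>x. (u has_real_derivative deriv u x) (at x)"
        using diff DERIV_deriv_iff_real_differentiable by blast
      have bpos: "0 < 2 * s + a - 1" using s a by simp
      have cd: "continuous_on UNIV (deriv u)" by (rule holder_cont[OF bpos hol2])
      obtain M where M: "\<And>x y. \<bar>deriv u x - deriv u y\<bar> \<le> M * \<bar>x - y\<bar> powr (2 * s + a - 1)"
        using hol2 unfolding holder_on_def by blast
      have "\<bar>deriv u x - deriv u y\<bar> \<le> \<bar>M\<bar> * \<bar>x - y\<bar> powr (2 * s + a - 1)" for x y
      proof -
        have "M * \<bar>x - y\<bar> powr (2 * s + a - 1) \<le> \<bar>M\<bar> * \<bar>x - y\<bar> powr (2 * s + a - 1)"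
          by (intro mult_right_mono) auto
        then show ?thesis using M[of x y] by linarith
      qed
      then show ?thesis using du' cd bpos a
        by (intro exI[of _ "2 * s + a - 1"] exI[of _ "\<bar>M\<bar>"]) auto
    next
      case False
      have cei: "\<lceil>2 * s + a\<rceil> = 3" by (rule ceiling_unique) (use False s a in auto)
      have h1: "\<forall>j<nat 3 - 1. \<forall>x. (deriv ^^ j) u differentiable (at x)"
        and h2: "holder_on (2 * s + a - real (nat 3 - 1)) UNIV ((deriv ^^ (nat 3 - 1)) u)"
        using hs unfolding holder_space_def Let_def cei by auto
      have "nat 3 - 1 = 2" by simp
      then have h1': "\<forall>j<2. \<forall>x. (deriv ^^ j) u differentiable (at x)"
        and h2': "holder_on (2 * s + a - 2) UNIV ((deriv ^^ 2) u)" using h1 h2 by simp_all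
      have diff0: "\<forall>x. u differentiable (at x)" using h1'[rule_format, of 0] by simp
      have diff1: "\<forall>x. deriv u differentiable (at x)" using h1'[rule_format, of 1] by simp
      have hol2: "holder_on (2 * s + a - 2) UNIV (deriv (deriv u))"
        using h2' by (simp add: numeral_2_eq_2)
      have du': "\<And>x. (u has_real_derivative deriv u x) (at x)"
        using diff0 DERIV_deriv_iff_real_differentiable by blast
      have d2: "\<And>x. (deriv u has_real_derivative deriv (deriv u) x) (at x)"
        using diff1 DERIV_deriv_iff_real_differentiable by blast
      have cd: "continuous_on UNIV (deriv u)"
        using d2 by (meson DERIV_isCont continuous_at_imp_continuous_on)
      have bpos: "0 < 2 * s + a - 2" using False by simp
      have cd2: "continuous_on UNIV (deriv (deriv u))" by (rule holder_cont[OF bpos hol2])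
      have dper': "\<And>x. deriv u (x + p) = deriv u x" by (rule deriv_periodic[OF du' per])
      have d2per: "\<And>x. deriv (deriv u) (x + p) = deriv (deriv u) x" by (rule deriv_periodic[OF d2 dper'])
      obtain K where K: "\<And>x. \<bar>deriv (deriv u) x\<bar> \<le> K" using periodic_abs_bound[OF cd2 d2per p] by blast
      have K0: "K \<ge> 0" using K[of 0] by linarith
      have "\<bar>deriv u x - deriv u y\<bar> \<le> K * \<bar>x - y\<bar> powr 1" for x y
      proof (cases "x = y")
        case True then show ?thesis by simp
      next
        case False
        then show ?thesis using lip_bound[OF d2 K, of x y] by simp
      qed
      then show ?thesis using du' cd K0 s
        by (intro exI[of _ 1] exI[of _ K]) auto
    qed
    then show ?thesis using that by blast
  qed
  have cu: "continuous_on UNIV u"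
    using du by (meson DERIV_isCont continuous_at_imp_continuous_on)
  have dper: "\<And>x. deriv u (x + p) = deriv u x" by (rule deriv_periodic[OF du per])
  obtain B where B: "\<And>x. \<bar>u x\<bar> \<le> B" using periodic_abs_bound[OF cu per p] by blast
  obtain B1 where B1: "\<And>x. \<bar>deriv u x\<bar> \<le> B1" using periodic_abs_bound[OF cdu dper p] by blast
  have tay: "\<And>t h. \<bar>h\<bar> \<le> 1 \<Longrightarrow> \<bar>u (t + h) - u t - deriv u t * h\<bar> \<le> M0 * \<bar>h\<bar> powr (1 + bb)"
    by (rule taylor_holder[OF du hol M0 bb(2)])
  have cug: "continuous_on UNIV (\<lambda>t. g (u t))"
    by (rule continuous_on_compose2[OF cg cu]) (use upos in auto)
  define V where "V t = lam * e t + lam * g (u t) - c * deriv u t" for t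
  have cV: "continuous_on UNIV V"
    unfolding V_def using ce cug cdu by (intro continuous_intros) auto
  have hV: "has_pos_frac_lap s u t (V t)" for t
  proof -
    obtain v where "has_pos_frac_lap s u t v" "v + c * deriv u t - lam * g (u t) = lam * e t"
      using eqn[of t] by blast
    moreover have "v = V t" using calculation(2) by (simp add: V_def algebra_simps)
    ultimately show ?thesis by simp
  qed
  have IV: "integral {0..p} V = 0 \<and> integral {0..p} (\<lambda>t. V t * deriv u t) = 0"
  proof (cases "C1 s = 0")
    case True
    have "V t = 0" for t using hV[of t] True by (auto simp: has_pos_frac_lap_def)
    then have "V = (\<lambda>_. 0)" by (simp add: fun_eq_iff)
    then show ?thesis by simp
  next
    case False
    define Lf where "Lf t = - V t / C1 s" for t
    have pvL: "pv_frac s u t (Lf t)" for t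
    proof -
      obtain L where "pv_frac s u t L" "V t = - (C1 s * L)" using hV[of t] by (auto simp: has_pos_frac_lap_def)
      moreover have "L = Lf t" using calculation(2) False by (simp add: Lf_def)
      ultimately show ?thesis by simp
    qed
    have cL: "continuous_on UNIV Lf" unfolding Lf_def using cV False by (intro continuous_intros) auto
    have VL: "V t = - C1 s * Lf t" for t using False by (simp add: Lf_def)
    have core: "integral {0..p} Lf = 0 \<and> integral {0..p} (\<lambda>t. Lf t * deriv u t) = 0"
      by (rule frac_core[OF p per du cdu dper _ _ bb(1) M0 tay B B1 pvL cL]) (use s in auto)
    have "V = (\<lambda>t. - C1 s * Lf t)" using VL by (simp add: fun_eq_iff)
    then have "integral {0..p} V = integral {0..p} (\<lambda>t. - C1 s * Lf t)" by simp
    also have "\<dots> = 0" using core by simp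
    finally have 1: "integral {0..p} V = 0" .
    have "(\<lambda>t. V t * deriv u t) = (\<lambda>t. - C1 s * (Lf t * deriv u t))" using VL by (simp add: fun_eq_iff)
    then have "integral {0..p} (\<lambda>t. V t * deriv u t) = integral {0..p} (\<lambda>t. - C1 s * (Lf t * deriv u t))"
      by simp
    also have "\<dots> = 0" using core by (simp only: integral_mult_right)
    finally show ?thesis using 1 by simp
  qed
  define eb where "eb = integral {0..p} e / p"
  have T0': "\<And>t. t \<ge> T0 \<Longrightarrow> g t + eb < 0" using T0 by (simp add: eb_def p_def)
  have int_cont: "(f has_integral integral {0..p} f) {0..p}" if "continuous_on UNIV f" for f :: "real \<Rightarrow> real"
    by (rule integrable_integral, rule integrable_continuous_interval) (use that continuous_on_subset in blast)
  have Hdu: "(deriv u has_integral 0) {0..p}"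
    using ftc_real[of 0 p u "deriv u", OF _ du] p per[of 0] by simp
  have eqn2: "c * deriv u t = lam * e t + lam * g (u t) - V t" for t by (simp add: V_def)
  define Ie where "Ie = integral {0..p} e"
  define Ig where "Ig = integral {0..p} (\<lambda>t. g (u t))"
  have HV: "(V has_integral 0) {0..p}" using int_cont[OF cV] IV by simp
  have IgIe: "Ig = - Ie"
  proof -
    have "((\<lambda>t. lam * e t + lam * g (u t) - V t) has_integral (lam * Ie + lam * Ig - 0)) {0..p}"
      unfolding Ie_def Ig_def
      by (intro has_integral_diff has_integral_add has_integral_mult_right int_cont ce cug HV)
    moreover have "((\<lambda>t. c * deriv u t) has_integral (c * 0)) {0..p}"
      by (rule has_integral_mult_right[OF Hdu])
    ultimately have "lam * Ie + lam * Ig - 0 = c * 0"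
      using has_integral_unique by (simp add: eqn2)
    then have "lam * (Ie + Ig) = 0" by (simp add: algebra_simps)
    then show ?thesis using lam by simp
  qed
  obtain t0 where t0: "t0 \<in> {0..p}" "u t0 \<le> T0"
  proof (rule ccontr)
    assume "\<not> thesis"
    then have big: "\<And>t. t \<in> {0..p} \<Longrightarrow> u t > T0" using that by force
    have cf: "continuous_on {0..p} (\<lambda>t. g (u t) + eb)"
      using cug by (auto intro!: continuous_intros intro: continuous_on_subset)
    obtain x where x: "x \<in> {0..p}" "\<And>y. y \<in> {0..p} \<Longrightarrow> g (u y) + eb \<le> g (u x) + eb"
      using continuous_attains_sup[OF compact_Icc _ cf] p by auto
    have neg: "g (u x) + eb < 0" using T0' big[OF x(1)] by simp
    have "integral {0..p} (\<lambda>t. g (u t) + eb) \<le> integral {0..p} (\<lambda>t. g (u x) + eb)"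
      by (rule integral_le) (use cf x in \<open>auto intro: integrable_continuous_interval\<close>)
    also have "\<dots> = p * (g (u x) + eb)" using p by simp
    also have "\<dots> < 0" using p neg by (simp add: mult_pos_neg)
    finally have lt: "integral {0..p} (\<lambda>t. g (u t) + eb) < 0" .
    have "((\<lambda>t. g (u t) + eb) has_integral (Ig + p * eb)) {0..p}"
      unfolding Ig_def using has_integral_add[OF int_cont[OF cug] has_integral_const_real[of eb 0 p]] p
      by simp
    then have "integral {0..p} (\<lambda>t. g (u t) + eb) = Ig + p * eb" by (rule integral_unique)
    also have "\<dots> = 0" using IgIe p by (simp add: eb_def Ie_def)
    finally show False using lt by simp
  qed
  obtain x0 where x0: "x0 \<in> {0..p}" "\<And>x. u x0 \<le> u x" using periodic_bounds(1)[OF cu per p] by blast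
  obtain x1 where x1: "x1 \<in> {0..p}" "\<And>x. u x \<le> u x1" using periodic_bounds(2)[OF cu per p] by blast
  define a0 where "a0 = u x0 / 2"
  define b0 where "b0 = u x1 + 1"
  have a0p: "a0 > 0" using upos by (simp add: a0_def)
  have uin: "u t \<in> {a0<..<b0}" for t
  proof -
    have "u x0 > 0" using upos by blast
    then show ?thesis using x0(2)[of t] x1(2)[of t] unfolding a0_def b0_def by simp
  qed
  have cgab: "continuous_on {a0..b0} g" by (rule continuous_on_subset[OF cg]) (use a0p in auto)
  define Gf where "Gf x = integral {a0..x} g" for x
  have dG: "(Gf has_real_derivative g y) (at y)" if y: "y \<in> {a0<..<b0}" for y
  proof -
    have "(Gf has_real_derivative g y) (at y within {a0..b0})"
      unfolding Gf_def by (rule integral_has_real_derivative[OF cgab]) (use y in auto)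
    then have "(Gf has_real_derivative g y) (at y within {a0<..<b0})"
      by (rule DERIV_subset) auto
    moreover have eqat: "at y within {a0<..<b0} = at y" by (rule at_within_open) (use y in auto)
    ultimately show ?thesis by simp
  qed
  have dGu: "((\<lambda>t. Gf (u t)) has_real_derivative g (u t) * deriv u t) (at t)" for t
    by (rule DERIV_chain2[OF dG[OF uin] du])
  have Hgu: "((\<lambda>t. g (u t) * deriv u t) has_integral 0) {0..p}"
  proof -
    have up: "u p = u 0" using per[of 0] by simp
    have "((\<lambda>t. g (u t) * deriv u t) has_integral (Gf (u p) - Gf (u 0))) {0..p}"
      by (rule ftc_real[of 0 p "\<lambda>t. Gf (u t)", OF _ dGu]) (use p in simp)
    then show ?thesis unfolding up by simp
  qed
  define Q where "Q = integral {0..p} (\<lambda>t. (deriv u t)\<^sup>2)"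
  define E where "E = integral {0..p} (\<lambda>t. (e t)\<^sup>2)"
  define Ieu where "Ieu = integral {0..p} (\<lambda>t. e t * deriv u t)"
  have cdu2: "continuous_on UNIV (\<lambda>t. (deriv u t)\<^sup>2)" using cdu by (intro continuous_intros)
  have ce2: "continuous_on UNIV (\<lambda>t. (e t)\<^sup>2)" using ce by (intro continuous_intros)
  have ceu: "continuous_on UNIV (\<lambda>t. e t * deriv u t)" using ce cdu by (intro continuous_intros)
  have HQ: "((\<lambda>t. (deriv u t)\<^sup>2) has_integral Q) {0..p}" unfolding Q_def by (rule int_cont[OF cdu2])
  have HE: "((\<lambda>t. (e t)\<^sup>2) has_integral E) {0..p}" unfolding E_def by (rule int_cont[OF ce2])
  have Heu: "((\<lambda>t. e t * deriv u t) has_integral Ieu) {0..p}" unfolding Ieu_def by (rule int_cont[OF ceu])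
  have HVu: "((\<lambda>t. V t * deriv u t) has_integral 0) {0..p}"
  proof -
    have "continuous_on UNIV (\<lambda>t. V t * deriv u t)" using cV cdu by (intro continuous_intros)
    from int_cont[OF this] IV show ?thesis by simp
  qed
  have cQ: "c * Q = lam * Ieu"
  proof -
    have "((\<lambda>t. lam * (e t * deriv u t) + lam * (g (u t) * deriv u t) - V t * deriv u t) has_integral
        (lam * Ieu + lam * 0 - 0)) {0..p}"
      by (intro has_integral_diff has_integral_add has_integral_mult_right Heu Hgu HVu)
    moreover have "(\<lambda>t. lam * (e t * deriv u t) + lam * (g (u t) * deriv u t) - V t * deriv u t)
        = (\<lambda>t. c * (deriv u t)\<^sup>2)"
    proof (rule ext)
      fix t
      have "c * (deriv u t)\<^sup>2 = (c * deriv u t) * deriv u t" by (simp add: power2_eq_square)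
      also have "\<dots> = (lam * e t + lam * g (u t) - V t) * deriv u t" by (simp only: eqn2)
      finally show "lam * (e t * deriv u t) + lam * (g (u t) * deriv u t) - V t * deriv u t = c * (deriv u t)\<^sup>2"
        by (simp add: algebra_simps)
    qed
    ultimately have "((\<lambda>t. c * (deriv u t)\<^sup>2) has_integral (lam * Ieu)) {0..p}" by simp
    moreover have "((\<lambda>t. c * (deriv u t)\<^sup>2) has_integral (c * Q)) {0..p}"
      by (rule has_integral_mult_right[OF HQ])
    ultimately show ?thesis using has_integral_unique by blast
  qed
  have iQ: "(\<lambda>t. (deriv u t)\<^sup>2) integrable_on {0..p}" using HQ by blast
  have iE: "(\<lambda>t. (e t)\<^sup>2) integrable_on {0..p}" using HE by blast
  have Q0: "Q \<ge> 0" unfolding Q_def by (rule integral_nonneg[OF iQ]) simp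
  have E0: "E \<ge> 0" unfolding E_def by (rule integral_nonneg[OF iE]) simp
  have Ieu_le: "Ieu \<le> c / 2 * Q + E / (2 * c)"
  proof -
    have "((\<lambda>t. c / 2 * (deriv u t)\<^sup>2 + (e t)\<^sup>2 / (2 * c)) has_integral (c / 2 * Q + E / (2 * c))) {0..p}"
      by (intro has_integral_add has_integral_mult_right has_integral_divide HQ HE)
    with Heu show ?thesis
      by (rule has_integral_le) (rule amgm_aux[OF c])
  qed
  have QE: "Q \<le> E / c\<^sup>2"
  proof -
    have "c * Q \<le> c / 2 * Q + E / (2 * c)"
    proof (cases "Ieu \<le> 0")
      case True
      then have "c * Q \<le> 0" using cQ lam by (simp add: mult_nonneg_nonpos)
      moreover have "0 \<le> c / 2 * Q + E / (2 * c)" using Q0 E0 c by simp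
      ultimately show ?thesis by linarith
    next
      case False
      then have "lam * Ieu \<le> Ieu" using lam by (simp add: mult_left_le_one_le)
      then show ?thesis using cQ Ieu_le by linarith
    qed
    then have "c / 2 * Q \<le> E / (2 * c)" by (simp add: algebra_simps)
    then have "c * (c * Q) \<le> E" using c by (simp add: field_simps)
    then show ?thesis using c by (simp add: field_simps power2_eq_square)
  qed
  have sq: "sqrt Q \<le> 1 / c * sqrt E"
  proof -
    have "sqrt Q \<le> sqrt (E / c\<^sup>2)" using QE by (rule real_sqrt_le_mono)
    also have "\<dots> = 1 / c * sqrt E" using c by (simp add: real_sqrt_divide)
    finally show ?thesis .
  qed
  have osc: "\<bar>u y - u t0\<bar> \<le> (p + Q) / 2" if y: "y \<in> {0..p}" for y
  proof -
    define lo where "lo = min y t0"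
    define hi where "hi = max y t0"
    have lohi: "lo \<le> hi" "{lo..hi} \<subseteq> {0..p}" using y t0 by (auto simp: lo_def hi_def)
    have "(deriv u has_integral (u hi - u lo)) {lo..hi}" by (rule ftc_real[OF lohi(1) du])
    then have i1: "integral {lo..hi} (deriv u) = u hi - u lo" by (rule integral_unique)
    have cF: "continuous_on UNIV (\<lambda>t. (1 + (deriv u t)\<^sup>2) / 2)" using cdu by (intro continuous_intros) auto
    have iF: "(\<lambda>t. (1 + (deriv u t)\<^sup>2) / 2) integrable_on {lo..hi}"
      by (rule integrable_continuous_interval) (use cF continuous_on_subset in blast)
    have idu: "deriv u integrable_on {lo..hi}"
      by (rule integrable_continuous_interval) (use cdu continuous_on_subset in blast)
    have "norm (integral {lo..hi} (deriv u)) \<le> integral {lo..hi} (\<lambda>t. (1 + (deriv u t)\<^sup>2) / 2)"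
      by (rule integral_norm_bound_integral[OF idu iF]) (use abs_le_sq_aux in \<open>simp only: real_norm_def\<close>)
    then have "\<bar>u hi - u lo\<bar> \<le> integral {lo..hi} (\<lambda>t. (1 + (deriv u t)\<^sup>2) / 2)"
      by (simp add: i1)
    also have "\<dots> \<le> integral {0..p} (\<lambda>t. (1 + (deriv u t)\<^sup>2) / 2)"
    proof (rule integral_subset_le[OF lohi(2) iF])
      show "(\<lambda>t. (1 + (deriv u t)\<^sup>2) / 2) integrable_on {0..p}"
        by (rule integrable_continuous_interval) (use cF continuous_on_subset in blast)
    qed simp
    also have "\<dots> = (p + Q) / 2"
    proof -
      have "((\<lambda>t. (1 + (deriv u t)\<^sup>2) / 2) has_integral ((p + Q) / 2)) {0..p}"
        using has_integral_divide[OF has_integral_add[OF has_integral_const_real[of 1 0 p] HQ], of 2] p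
        by simp
      then show ?thesis by (rule integral_unique)
    qed
    finally have fin: "\<bar>u hi - u lo\<bar> \<le> (p + Q) / 2" .
    show ?thesis
    proof (cases "y \<le> t0")
      case True
      then have "lo = y" "hi = t0" by (auto simp: lo_def hi_def)
      then show ?thesis using fin by (simp add: abs_minus_commute)
    next
      case False
      then have "lo = t0" "hi = y" by (auto simp: lo_def hi_def)
      then show ?thesis using fin by simp
    qed
  qed
  have ub: "u t < T0 + (p + E / c\<^sup>2) / 2 + 1" for t
  proof -
    obtain y where y: "y \<in> {0..p}" "u t = u y" using periodic_reduce[of u p, OF per p, of t] by blast
    have "u y \<le> u t0 + (p + Q) / 2" using osc[OF y(1)] by linarith
    also have "\<dots> \<le> T0 + (p + E / c\<^sup>2) / 2"
    proof -
      have "(p + Q) / 2 \<le> (p + E / c\<^sup>2) / 2" using QE by (intro divide_right_mono) auto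
      then show ?thesis using t0(2) by linarith
    qed
    finally show ?thesis using y(2) by linarith
  qed
  show ?thesis unfolding p_def[symmetric] using ub sq by (simp add: Q_def E_def)
qed

theorem lemma4p8:
  fixes s a c :: real and e g :: "real \<Rightarrow> real"
  assumes s: "1/2 < s" "s < 1"
    and a: "0 < a" "a < 1"
    and c: "c > 0"
    and e_hol: "holder_on a UNIV e"
    and e_per: "\<forall>t. e (t + 2 * pi) = e t"
    and e_mean: "integral {0..2*pi} e / (2 * pi) > 0"
    and g_hol: "loc_holder_on a {0<..} g"
    and G1: "Limsup at_top (\<lambda>t. ereal (g t + integral {0..2*pi} e / (2 * pi))) < 0"
  shows "\<exists>R>0. \<exists>C>0. \<forall>lam u. 0 < lam \<and> lam < 1 \<and> (\<forall>t. u t > 0) \<and>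
            (\<forall>t. u (t + 2 * pi) = u t) \<and> classical_solution s a c lam g e u \<longrightarrow>
            (\<forall>t. 0 < u t \<and> u t < R) \<and>
            sqrt (integral {0..2*pi} (\<lambda>t. (deriv u t)\<^sup>2))
              \<le> C * sqrt (integral {0..2*pi} (\<lambda>t. (e t)\<^sup>2))"
proof -
  have ce: "continuous_on UNIV e" by (rule holder_cont[OF a(1) e_hol])
  have cg: "continuous_on {0<..} g"
  proof -
    have "isCont g x" if x: "x > 0" for x
    proof -
      have K: "compact {x/2..x+1}" "{x/2..x+1} \<subseteq> {0<..}" using x by auto
      then have "holder_on a {x/2..x+1} g" using g_hol unfolding loc_holder_on_def by blast
      then have "continuous_on {x/2..x+1} g" by (rule holder_cont[OF a(1)])
      moreover have "x \<in> interior {x/2..x+1}" using x by simp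
      ultimately show ?thesis by (rule continuous_on_interior)
    qed
    then show ?thesis by (intro continuous_at_imp_continuous_on) auto
  qed
  define eb where "eb = integral {0..2*pi} e / (2 * pi)"
  have "eventually (\<lambda>t. ereal (g t + eb) < 0) at_top"
    by (rule Limsup_lessD) (use G1 in \<open>simp add: eb_def\<close>)
  then obtain N where N: "\<And>t. t \<ge> N \<Longrightarrow> ereal (g t + eb) < 0"
    unfolding eventually_at_top_linorder by blast
  define T0 where "T0 = max N 1"
  have T0: "\<And>t. t \<ge> T0 \<Longrightarrow> g t + integral {0..2*pi} e / (2 * pi) < 0"
    using N by (fastforce simp: T0_def eb_def)
  have T01: "T0 \<ge> 1" by (simp add: T0_def)
  define E where "E = integral {0..2*pi} (\<lambda>t. (e t)\<^sup>2)"
  have E0: "E \<ge> 0" unfolding E_def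
  proof (rule integral_nonneg)
    show "(\<lambda>t. (e t)\<^sup>2) integrable_on {0..2 * pi}"
      by (rule integrable_continuous_interval) (use ce in \<open>auto intro!: continuous_intros intro: continuous_on_subset\<close>)
  qed simp
  define R where "R = T0 + (2 * pi + E / c\<^sup>2) / 2 + 1"
  have R0: "R > 0" unfolding R_def using T01 E0 c pi_gt_zero
    by (smt (verit) divide_nonneg_nonneg zero_le_power2)
  have C0: "1 / c > 0" using c by simp
  have main: "(\<forall>t. 0 < u t \<and> u t < R) \<and>
            sqrt (integral {0..2*pi} (\<lambda>t. (deriv u t)\<^sup>2))
              \<le> 1 / c * sqrt (integral {0..2*pi} (\<lambda>t. (e t)\<^sup>2))"
    if H: "0 < lam \<and> lam < 1 \<and> (\<forall>t. u t > 0) \<and>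
            (\<forall>t. u (t + 2 * pi) = u t) \<and> classical_solution s a c lam g e u" for lam u
  proof -
    have "(\<forall>t. u t < T0 + (2 * pi + integral {0..2*pi} (\<lambda>t. (e t)\<^sup>2) / c\<^sup>2) / 2 + 1) \<and>
         sqrt (integral {0..2*pi} (\<lambda>t. (deriv u t)\<^sup>2)) \<le> 1 / c * sqrt (integral {0..2*pi} (\<lambda>t. (e t)\<^sup>2))"
      by (rule solution_bounds[OF s a c ce e_per cg T0]) (use H in auto)
    then show ?thesis using H by (simp add: R_def E_def)
  qed
  show ?thesis
    apply (rule exI[of _ R], rule conjI[OF R0])
    apply (rule exI[of _ "1 / c"], rule conjI[OF C0])
    using main by blast
qed

end
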